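(* Let $R$ be a unique factorization domain. Let $n,m\geqslant 1$, $s_1,\dots,s_n\in(\operatorname{Sqf} R)\setminus R^{\ast}$ and $t_1,\dots,t_m\in(\operatorname{Sqf} R)\setminus R^{\ast}$, integers $k_1,\dots,k_n\geqslant 1$ and $l_1,\dots,l_m\geqslant 1$, and $c,d\in R^{\ast}$, such that $s_i\mid s_{i+1}$ and $s_i\not\sim s_{i+1}$ for $i=1,\dots,n-1$, and $t_i\mid t_{i+1}$ and $t_i\not\sim t_{i+1}$ for $i=1,\dots,m-1$. If $$c\,s_1^{k_1}s_2^{k_2}\cdots s_n^{k_n}=d\,t_1^{l_1}t_2^{l_2}\cdots t_m^{l_m},$$ then $n=m$, and $s_i\sim t_i$ and $k_i=l_i$ for $i=1,\dots,n$.
   Context: $R^{\ast}$ denotes the set of invertible elements of $R$; $a\sim b$ means $a$ and $b$ are associated; $a\mid b$ means $a$ divides $b$. An element $a\in R$ is square-free if it cannot be written as $a=b^2c$ with $b\in R\setminus R^{\ast}$ and $c\in R$; $\operatorname{Sqf} R$ denotes the set of square-free elements of $R$. *)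

theory Defs
  imports "HOL-Computational_Algebra.Factorial_Ring"
begin

definition sqf :: "'a::comm_semiring_1 \<Rightarrow> bool" where
  "sqf a \<longleftrightarrow> \<not> (\<exists>b c. \<not> b dvd 1 \<and> a = b^2 * c)"

definition assoc :: "'a::comm_semiring_1 \<Rightarrow> 'a \<Rightarrow> bool" where
  "assoc a b \<longleftrightarrow> a dvd b \<and> b dvd a"

end

theory Submission imports Defs begin

lemma sqf_nz: "sqf (x::'a::{factorial_semiring,idom}) \<Longrightarrow> x \<noteq> 0"
  unfolding sqf_def by (metis mult_zero_right zero_neq_one dvd_0_left)

lemma sqf_mult:
  assumes "sqf (x::'a::{factorial_semiring,idom})" "prime p"
  shows "multiplicity p x = (if p dvd x then 1 else 0)"
proof -
  have x0: "x \<noteq> 0" using sqf_nz assms(1) .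
  have "multiplicity p x \<le> 1"
  proof (rule ccontr)
    assume "\<not> multiplicity p x \<le> 1"
    then have "p ^ 2 dvd x" by (intro multiplicity_dvd') simp
    then obtain c where "x = p^2 * c" by (auto elim: dvdE)
    moreover have "\<not> p dvd 1" using assms(2) by auto
    ultimately show False using assms(1) unfolding sqf_def by blast
  qed
  moreover have "p dvd x \<longleftrightarrow> multiplicity p x > 0"
    using prime_multiplicity_gt_zero_iff[of p x] assms x0 by auto
  ultimately show ?thesis by auto
qed


context
  fixes s :: "nat \<Rightarrow> 'a::{factorial_semiring,idom}" and k :: "nat \<Rightarrow> nat" and n :: nat and c :: 'a
  assumes sq: "\<forall>i\<in>{1..n}. sqf (s i) \<and> \<not> is_unit (s i)"
    and kp: "\<forall>i\<in>{1..n}. k i \<ge> 1"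
    and cu: "is_unit c"
    and ch: "\<forall>i\<in>{1..n-1}. s i dvd s (i+1) \<and> \<not> assoc (s i) (s (i+1))"
begin

lemma side_mono:
  assumes "i \<le> j" "1 \<le> i" "j \<le> n" "p dvd s i"
  shows "p dvd s j"
  using assms(1,3)
proof (induction j rule: dec_induct)
  case base then show ?case using assms(4) by simp
next
  case (step j)
  then have "j \<in> {1..n-1}" using assms(2) by auto
  then have "s j dvd s (j+1)" using ch by blast
  moreover have "p dvd s j" using step by simp
  ultimately show ?case by (simp add: dvd_trans)
qed

lemma side_mult:
  assumes "prime p"
  shows "multiplicity p (c * (\<Prod>i=1..n. s i ^ k i)) = (\<Sum>i=1..n. if p dvd s i then k i else 0)"
proof -
  have nz: "\<forall>i\<in>{1..n}. s i \<noteq> 0" using sq sqf_nz by blast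
  have "multiplicity p (c * (\<Prod>i=1..n. s i ^ k i)) = multiplicity p (\<Prod>i=1..n. s i ^ k i)"
    using cu by (rule multiplicity_times_unit_right)
  also have "\<dots> = (\<Sum>i=1..n. multiplicity p (s i ^ k i))"
    using nz assms by (intro prime_elem_multiplicity_prod_distrib) auto
  also have "\<dots> = (\<Sum>i=1..n. if p dvd s i then k i else 0)"
  proof (rule sum.cong)
    fix i assume i: "i \<in> {1..n}"
    then have "multiplicity p (s i ^ k i) = k i * multiplicity p (s i)"
      using nz assms by (intro prime_elem_multiplicity_power_distrib) auto
    then show "multiplicity p (s i ^ k i) = (if p dvd s i then k i else 0)"
      using sqf_mult[of "s i" p] sq i assms by auto
  qed simp
  finally show ?thesis .
qed

lemma side_C:
  assumes "prime p" "i \<in> {1..n}"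
  shows "p dvd s i \<longleftrightarrow> (\<Sum>j=i..n. k j) \<le> multiplicity p (c * (\<Prod>i=1..n. s i ^ k i))"
proof -
  let ?f = "\<lambda>j. if p dvd s j then k j else 0"
  have split: "(\<Sum>j=1..n. ?f j) = (\<Sum>j=1..<i. ?f j) + (\<Sum>j=i..n. ?f j)"
  proof -
    have "{1..n} = {1..<i} \<union> {i..n}" using assms(2) by auto
    then show ?thesis by (simp add: sum.union_disjoint ivl_disj_int)
  qed
  show ?thesis
  proof
    assume d: "p dvd s i"
    have "(\<Sum>j=i..n. ?f j) = (\<Sum>j=i..n. k j)"
    proof (rule sum.cong)
      fix j assume j: "j \<in> {i..n}"
      then have "p dvd s j" using side_mono[of i j p] d assms(2) by auto
      then show "?f j = k j" by simp
    qed simp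
    then show "(\<Sum>j=i..n. k j) \<le> multiplicity p (c * (\<Prod>i=1..n. s i ^ k i))"
      using side_mult[OF assms(1)] split by simp
  next
    assume le: "(\<Sum>j=i..n. k j) \<le> multiplicity p (c * (\<Prod>i=1..n. s i ^ k i))"
    show "p dvd s i"
    proof (rule ccontr)
      assume nd: "\<not> p dvd s i"
      have a: "(\<Sum>j=1..<i. ?f j) = 0"
      proof (intro sum.neutral ballI)
        fix j assume j: "j \<in> {1..<i}"
        have "\<not> p dvd s j" using side_mono[of j i p] nd j assms(2) by auto
        then show "?f j = 0" by simp
      qed
      have "(\<Sum>j=i..n. ?f j) \<le> (\<Sum>j=Suc i..n. k j)"
      proof -
        have "(\<Sum>j=i..n. ?f j) = ?f i + (\<Sum>j=Suc i..n. ?f j)"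
          using assms(2) by (intro sum.atLeast_Suc_atMost) auto
        also have "\<dots> \<le> 0 + (\<Sum>j=Suc i..n. k j)"
          using nd by (intro add_mono sum_mono) auto
        finally show ?thesis by simp
      qed
      moreover have "(\<Sum>j=i..n. k j) = k i + (\<Sum>j=Suc i..n. k j)"
        using assms(2) by (intro sum.atLeast_Suc_atMost) auto
      moreover have "k i \<ge> 1" using kp assms(2) by auto
      ultimately show False using le side_mult[OF assms(1)] split a by simp
    qed
  qed
qed

lemma side_E:
  assumes "prime p" "i \<in> {1..n}" "p dvd s i" "i = 1 \<or> \<not> p dvd s (i-1)"
  shows "multiplicity p (c * (\<Prod>i=1..n. s i ^ k i)) = (\<Sum>j=i..n. k j)"
proof -
  let ?f = "\<lambda>j. if p dvd s j then k j else 0"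
  have split: "(\<Sum>j=1..n. ?f j) = (\<Sum>j=1..<i. ?f j) + (\<Sum>j=i..n. ?f j)"
  proof -
    have "{1..n} = {1..<i} \<union> {i..n}" using assms(2) by auto
    then show ?thesis by (simp add: sum.union_disjoint ivl_disj_int)
  qed
  have a: "(\<Sum>j=1..<i. ?f j) = 0"
  proof (intro sum.neutral ballI)
    fix j assume j: "j \<in> {1..<i}"
    then have "i \<noteq> 1" by auto
    then have "\<not> p dvd s (i-1)" using assms(4) by auto
    moreover have "j \<le> i - 1" "1 \<le> j" "i - 1 \<le> n" using j assms(2) by auto
    ultimately have "\<not> p dvd s j" using side_mono[of j "i-1" p] by blast
    then show "?f j = 0" by simp
  qed
  have b: "(\<Sum>j=i..n. ?f j) = (\<Sum>j=i..n. k j)"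
  proof (rule sum.cong)
    fix j assume j: "j \<in> {i..n}"
    then have "p dvd s j" using side_mono[of i j p] assms(3) assms(2) by auto
    then show "?f j = k j" by simp
  qed simp
  show ?thesis using side_mult[OF assms(1)] split a b by simp
qed

lemma side_R:
  assumes "i \<in> {1..n}"
  shows "\<exists>p. prime p \<and> p dvd s i \<and> (i = 1 \<or> \<not> p dvd s (i-1))"
proof (cases "i = 1")
  case True
  have "sqf (s i)" "\<not> is_unit (s i)" using sq assms by auto
  then have "s i \<noteq> 0" "\<not> is_unit (s i)" using sqf_nz by auto
  then show ?thesis using prime_divisor_exists True by blast
next
  case False
  show ?thesis
  proof (rule ccontr)
    assume "\<not> ?thesis"
    then have all: "\<And>p. prime p \<Longrightarrow> p dvd s i \<Longrightarrow> p dvd s (i-1)" using False by auto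
    have i1: "i - 1 \<in> {1..n-1}" using assms False by auto
    have sqi: "sqf (s i)" and sqi1: "sqf (s (i-1))" using sq assms i1 by auto
    have "s i dvd s (i-1)"
    proof (rule multiplicity_le_imp_dvd)
      show "s i \<noteq> 0" using sqf_nz sqi .
      fix p :: 'a assume p: "prime p"
      show "multiplicity p (s i) \<le> multiplicity p (s (i-1))"
        using sqf_mult[OF sqi p] sqf_mult[OF sqi1 p] all[OF p] by auto
    qed
    moreover have "s (i-1) dvd s (i-1+1)" "\<not> assoc (s (i-1)) (s (i-1+1))" using ch i1 by blast+
    moreover have "i - 1 + 1 = i" using False assms by auto
    ultimately show False unfolding assoc_def by simp
  qed
qed

lemma side_D:
  assumes "prime p" "multiplicity p (c * (\<Prod>i=1..n. s i ^ k i)) \<noteq> 0"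
  shows "\<exists>i\<in>{1..n}. multiplicity p (c * (\<Prod>i=1..n. s i ^ k i)) = (\<Sum>j=i..n. k j)"
proof -
  let ?S = "{j\<in>{1..n}. p dvd s j}"
  have "?S \<noteq> {}"
  proof
    assume "?S = {}"
    then have "(\<Sum>i=1..n. if p dvd s i then k i else 0) = 0" by (intro sum.neutral) auto
    then show False using assms side_mult by simp
  qed
  moreover have fin: "finite ?S" by simp
  ultimately have m: "Min ?S \<in> ?S" by (rule Min_in[rotated])
  define i where "i = Min ?S"
  have "i = 1 \<or> \<not> p dvd s (i-1)"
  proof (rule ccontr)
    assume nt: "\<not> (i = 1 \<or> \<not> p dvd s (i-1))"
    then have "i - 1 \<in> ?S" using m i_def by auto
    then have "i \<le> i - 1" using Min_le[OF fin] i_def by blast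
    moreover have "i \<ge> 1" using m i_def by auto
    ultimately show False using nt by auto
  qed
  then show ?thesis using side_E[OF assms(1), of i] m i_def by auto
qed

end

lemma comb_strict:
  fixes K :: "nat \<Rightarrow> nat"
  assumes "\<forall>i\<in>{1..n-1}. K (i+1) < K i" "1 \<le> i" "i < j" "j \<le> n"
  shows "K j < K i"
  using assms(3,4)
proof (induction j rule: less_induct)
  case (less j)
  show ?case
  proof (cases "i = j - 1")
    case True
    then show ?thesis using assms(1,2) less.prems by (metis One_nat_def Suc_diff_1 Suc_eq_plus1 Suc_leI atLeastAtMost_iff diff_le_mono dual_order.strict_trans1 gr0I less_imp_le_nat not_less_zero)
  next
    case False
    then have "K (j-1) < K i" using less by auto
    moreover have "j - 1 \<in> {1..n-1}" using assms(2) less.prems False by auto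
    then have "K (j - 1 + 1) < K (j-1)" using assms(1) by blast
    moreover have "j - 1 + 1 = j" using less.prems by auto
    ultimately show ?thesis by simp
  qed
qed

lemma comb:
  fixes K L :: "nat \<Rightarrow> nat"
  assumes K: "\<forall>i\<in>{1..n-1}. K (i+1) < K i" and L: "\<forall>i\<in>{1..m-1}. L (i+1) < L i"
    and eq: "K ` {1..n} = L ` {1..m}"
  shows "n = m \<and> (\<forall>i\<in>{1..n}. K i = L i)"
proof -
  have injK: "inj_on K {1..n}"
    by (rule inj_onI) (metis atLeastAtMost_iff comb_strict[OF K] less_irrefl nat_neq_iff)
  have injL: "inj_on L {1..m}"
    by (rule inj_onI) (metis atLeastAtMost_iff comb_strict[OF L] less_irrefl nat_neq_iff)
  have nm: "n = m" using card_image[OF injK] card_image[OF injL] eq by simp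
  have cntK: "card {v \<in> K ` {1..n}. K i < v} = i - 1" if "i \<in> {1..n}" for i
  proof -
    have "{v \<in> K ` {1..n}. K i < v} = K ` {1..<i}"
    proof safe
      fix j assume j: "j \<in> {1..n}" "K i < K j"
      then have "j < i" using comb_strict[OF K, of i j] that by (metis atLeastAtMost_iff less_asym nat_neq_iff)
      then show "K j \<in> K ` {1..<i}" using j by auto
    next
      fix j assume "j \<in> {1..<i}" then show "K j \<in> K ` {1..n}" using that by auto
    next
      fix j assume "j \<in> {1..<i}" then show "K i < K j" using comb_strict[OF K, of j i] that by auto
    qed
    moreover have "inj_on K {1..<i}" by (rule inj_on_subset[OF injK]) (use that in auto)
    ultimately show ?thesis by (simp add: card_image)
  qed
  have cntL: "card {v \<in> L ` {1..m}. L i < v} = i - 1" if "i \<in> {1..m}" for i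
  proof -
    have "{v \<in> L ` {1..m}. L i < v} = L ` {1..<i}"
    proof safe
      fix j assume j: "j \<in> {1..m}" "L i < L j"
      then have "j < i" using comb_strict[OF L, of i j] that by (metis atLeastAtMost_iff less_asym nat_neq_iff)
      then show "L j \<in> L ` {1..<i}" using j by auto
    next
      fix j assume "j \<in> {1..<i}" then show "L j \<in> L ` {1..m}" using that by auto
    next
      fix j assume "j \<in> {1..<i}" then show "L i < L j" using comb_strict[OF L, of j i] that by auto
    qed
    moreover have "inj_on L {1..<i}" by (rule inj_on_subset[OF injL]) (use that in auto)
    ultimately show ?thesis by (simp add: card_image)
  qed
  have "K i = L i" if i: "i \<in> {1..n}" for i
  proof -
    obtain j where j: "j \<in> {1..m}" "K i = L j" using eq i by blast
    have "i - 1 = j - 1" using cntK[OF i] cntL[OF j(1)] j(2) eq by simp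
    then have "i = j" using i j by auto
    then show ?thesis using j by simp
  qed
  then show ?thesis using nm by auto
qed

theorem proposition2:
  fixes s t :: "nat \<Rightarrow> 'a::{factorial_semiring, idom}"
    and k l :: "nat \<Rightarrow> nat"
    and n m :: nat
    and c d :: 'a
  assumes "n \<ge> 1" and "m \<ge> 1"
    and "\<forall>i\<in>{1..n}. sqf (s i) \<and> \<not> is_unit (s i)"
    and "\<forall>i\<in>{1..m}. sqf (t i) \<and> \<not> is_unit (t i)"
    and "\<forall>i\<in>{1..n}. k i \<ge> 1"
    and "\<forall>i\<in>{1..m}. l i \<ge> 1"
    and "is_unit c" and "is_unit d"
    and "\<forall>i\<in>{1..n-1}. s i dvd s (i+1) \<and> \<not> assoc (s i) (s (i+1))"
    and "\<forall>i\<in>{1..m-1}. t i dvd t (i+1) \<and> \<not> assoc (t i) (t (i+1))"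
    and "c * (\<Prod>i=1..n. s i ^ k i) = d * (\<Prod>i=1..m. t i ^ l i)"
  shows "n = m \<and> (\<forall>i\<in>{1..n}. assoc (s i) (t i) \<and> k i = l i)"
proof -
  note sS = assms(3) assms(5) assms(7) assms(9)
  note sT = assms(4) assms(6) assms(8) assms(10)
  define A where "A = c * (\<Prod>i=1..n. s i ^ k i)"
  have AT: "A = d * (\<Prod>i=1..m. t i ^ l i)" using assms(11) A_def by simp
  define K where "K j = (\<Sum>i=j..n. k i)" for j
  define L where "L j = (\<Sum>i=j..m. l i)" for j
  have Kr: "K i = k i + K (i+1)" if "i \<in> {1..n}" for i
    unfolding K_def using that by (simp add: sum.atLeast_Suc_atMost)
  have Lr: "L i = l i + L (i+1)" if "i \<in> {1..m}" for i
    unfolding L_def using that by (simp add: sum.atLeast_Suc_atMost)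
  have VK: "K ` {1..n} = {multiplicity p A |p. prime p \<and> multiplicity p A \<noteq> 0}"
  proof (intro equalityI subsetI)
    fix x assume "x \<in> K ` {1..n}"
    then obtain i where i: "i \<in> {1..n}" and xi: "x = K i" by auto
    obtain p where p: "prime p" "p dvd s i" "i = 1 \<or> \<not> p dvd s (i-1)"
      using side_R[OF sS i] by blast
    have "multiplicity p A = K i" unfolding A_def K_def using side_E[OF sS p(1) i p(2,3)] .
    moreover have "K i \<noteq> 0" using Kr[OF i] bspec[OF assms(5) i] by linarith
    ultimately show "x \<in> {multiplicity p A |p. prime p \<and> multiplicity p A \<noteq> 0}"
      using p(1) xi by (intro CollectI exI[of _ p]) simp
  next
    fix x assume "x \<in> {multiplicity p A |p. prime p \<and> multiplicity p A \<noteq> 0}"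
    then obtain p :: 'a where "prime p" "multiplicity p A \<noteq> 0" "x = multiplicity p A" by auto
    then show "x \<in> K ` {1..n}"
      using side_D[OF sS, of p] unfolding A_def K_def by auto
  qed
  have VL: "L ` {1..m} = {multiplicity p A |p. prime p \<and> multiplicity p A \<noteq> 0}"
  proof (intro equalityI subsetI)
    fix x assume "x \<in> L ` {1..m}"
    then obtain i where i: "i \<in> {1..m}" and xi: "x = L i" by auto
    obtain p where p: "prime p" "p dvd t i" "i = 1 \<or> \<not> p dvd t (i-1)"
      using side_R[OF sT i] by blast
    have "multiplicity p A = L i" unfolding AT L_def using side_E[OF sT p(1) i p(2,3)] .
    moreover have "L i \<noteq> 0" using Lr[OF i] bspec[OF assms(6) i] by linarith
    ultimately show "x \<in> {multiplicity p A |p. prime p \<and> multiplicity p A \<noteq> 0}"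
      using p(1) xi by (intro CollectI exI[of _ p]) simp
  next
    fix x assume "x \<in> {multiplicity p A |p. prime p \<and> multiplicity p A \<noteq> 0}"
    then obtain p :: 'a where "prime p" "multiplicity p A \<noteq> 0" "x = multiplicity p A" by auto
    then show "x \<in> L ` {1..m}"
      using side_D[OF sT, of p] unfolding AT L_def by auto
  qed
  have Kd: "\<forall>i\<in>{1..n-1}. K (i+1) < K i"
  proof
    fix i assume i: "i \<in> {1..n-1}"
    then have "i \<in> {1..n}" by auto
    then show "K (i+1) < K i" using Kr assms(5) by fastforce
  qed
  have Ld: "\<forall>i\<in>{1..m-1}. L (i+1) < L i"
  proof
    fix i assume i: "i \<in> {1..m-1}"
    then have "i \<in> {1..m}" by auto
    then show "L (i+1) < L i" using Lr assms(6) by fastforce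
  qed
  from comb[OF Kd Ld] VK VL have nm: "n = m" and KL: "\<forall>i\<in>{1..n}. K i = L i" by auto
  have "assoc (s i) (t i) \<and> k i = l i" if i: "i \<in> {1..n}" for i
  proof
    have im: "i \<in> {1..m}" using i nm by simp
    have "K (i+1) = L (i+1)"
    proof (cases "i = n")
      case True then show ?thesis unfolding K_def L_def using nm by simp
    next
      case False then show ?thesis using KL i by auto
    qed
    then show "k i = l i" using Kr[OF i] Lr[OF im] KL i by auto
    have sqs: "sqf (s i)" and sqt: "sqf (t i)" using assms(3,4) i im by auto
    have dv: "p dvd s i \<longleftrightarrow> p dvd t i" if p: "prime p" for p
      using side_C[OF sS p i] side_C[OF sT p im] KL i unfolding A_def[symmetric] AT[symmetric] K_def[symmetric] L_def[symmetric]
      by auto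
    have "s i dvd t i"
      by (rule multiplicity_le_imp_dvd) (use sqf_nz[OF sqs] sqf_mult[OF sqs] sqf_mult[OF sqt] dv in auto)
    moreover have "t i dvd s i"
      by (rule multiplicity_le_imp_dvd) (use sqf_nz[OF sqt] sqf_mult[OF sqs] sqf_mult[OF sqt] dv in auto)
    ultimately show "assoc (s i) (t i)" unfolding assoc_def by simp
  qed
  then show ?thesis using nm by auto
qed

end
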